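(* For every $g:E^2\times E^2\to\mathbb R$, $$\log\varphi_1(g)\ge2\log\varphi_0(g).$$
   Context: Let $E$ be a finite set and $P,Q$ irreducible aperiodic stochastic $E\times E$ matrices. For $g:E^2\times E^2\to\mathbb R$, $\varphi_0(g)$ is the spectral radius of the $E^2\times E^2$ matrix $\Phi_0(g)_{(x,y),(x',y')}=\exp(g(x,y,x',y'))P_{x,x'}Q_{y,y'}$ and $\varphi_1(g)$ the spectral radius of the $E^3\times E^3$ matrix $\Phi_1(g)_{(x,y,z),(x',y',z')}=\exp(g(x,y,x',y')+g(x,z,x',z'))P_{x,x'}Q_{y,y'}Q_{z,z'}$. *)

theory Defs
  imports Complex_Main
begin

definition mat_mult :: "('n::finite \<Rightarrow> 'n \<Rightarrow> real) \<Rightarrow> ('n \<Rightarrow> 'n \<Rightarrow> real) \<Rightarrow> ('n \<Rightarrow> 'n \<Rightarrow> real)" where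
  "mat_mult A B = (\<lambda>i k. \<Sum>j\<in>UNIV. A i j * B j k)"

fun mat_pow :: "('n::finite \<Rightarrow> 'n \<Rightarrow> real) \<Rightarrow> nat \<Rightarrow> ('n \<Rightarrow> 'n \<Rightarrow> real)" where
  "mat_pow A 0 = (\<lambda>i j. if i = j then 1 else 0)"
| "mat_pow A (Suc n) = mat_mult (mat_pow A n) A"

definition stochastic :: "('n::finite \<Rightarrow> 'n \<Rightarrow> real) \<Rightarrow> bool" where
  "stochastic P \<longleftrightarrow> (\<forall>i j. P i j \<ge> 0) \<and> (\<forall>i. (\<Sum>j\<in>UNIV. P i j) = 1)"

definition irreducible_mat :: "('n::finite \<Rightarrow> 'n \<Rightarrow> real) \<Rightarrow> bool" where
  "irreducible_mat P \<longleftrightarrow> (\<forall>i j. \<exists>n>0. mat_pow P n i j > 0)"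

definition period :: "('n::finite \<Rightarrow> 'n \<Rightarrow> real) \<Rightarrow> 'n \<Rightarrow> nat" where
  "period P i = Gcd {n. n > 0 \<and> mat_pow P n i i > 0}"

definition aperiodic :: "('n::finite \<Rightarrow> 'n \<Rightarrow> real) \<Rightarrow> bool" where
  "aperiodic P \<longleftrightarrow> (\<forall>i. period P i = 1)"

definition eigenvalue :: "('n::finite \<Rightarrow> 'n \<Rightarrow> real) \<Rightarrow> complex \<Rightarrow> bool" where
  "eigenvalue M l \<longleftrightarrow> (\<exists>v::'n \<Rightarrow> complex. v \<noteq> (\<lambda>_. 0) \<and>
      (\<forall>i. (\<Sum>j\<in>UNIV. complex_of_real (M i j) * v j) = l * v i))"

definition spectral_radius :: "('n::finite \<Rightarrow> 'n \<Rightarrow> real) \<Rightarrow> real" where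
  "spectral_radius M = Max (cmod ` {l. eigenvalue M l})"

definition Phi0 :: "('e::finite \<Rightarrow> 'e \<Rightarrow> real) \<Rightarrow> ('e \<Rightarrow> 'e \<Rightarrow> real) \<Rightarrow>
    ('e \<Rightarrow> 'e \<Rightarrow> 'e \<Rightarrow> 'e \<Rightarrow> real) \<Rightarrow> ('e \<times> 'e) \<Rightarrow> ('e \<times> 'e) \<Rightarrow> real" where
  "Phi0 P Q g = (\<lambda>(x, y) (x', y'). exp (g x y x' y') * P x x' * Q y y')"

definition Phi1 :: "('e::finite \<Rightarrow> 'e \<Rightarrow> real) \<Rightarrow> ('e \<Rightarrow> 'e \<Rightarrow> real) \<Rightarrow>
    ('e \<Rightarrow> 'e \<Rightarrow> 'e \<Rightarrow> 'e \<Rightarrow> real) \<Rightarrow> ('e \<times> 'e \<times> 'e) \<Rightarrow> ('e \<times> 'e \<times> 'e) \<Rightarrow> real" where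
  "Phi1 P Q g = (\<lambda>(x, y, z) (x', y', z').
      exp (g x y x' y' + g x z x' z') * P x x' * Q y y' * Q z z')"

definition varphi0 where "varphi0 P Q g = spectral_radius (Phi0 P Q g)"
definition varphi1 where "varphi1 P Q g = spectral_radius (Phi1 P Q g)"

end

theory Submission
  imports Defs "Jordan_Normal_Form.Spectral_Radius"
begin


definition enl :: "'n::finite list" where
  "enl = (SOME xs. distinct xs \<and> set xs = UNIV)"

lemma enl_props: "distinct (enl::'n::finite list)" "set (enl::'n list) = UNIV"
proof -
  obtain xs :: "'n list" where "distinct xs \<and> set xs = UNIV"
    using finite_distinct_list[OF finite_UNIV] by metis
  hence "distinct (enl::'n list) \<and> set (enl::'n list) = UNIV"
    unfolding enl_def by (rule someI)
  thus "distinct (enl::'n::finite list)" "set (enl::'n list) = UNIV" by auto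
qed

lemma enl_length: "length (enl::'n::finite list) = (card (UNIV::'n set))"
  using distinct_card[OF enl_props(1)] enl_props(2) by metis

abbreviation ix :: "nat \<Rightarrow> 'n::finite" where "ix i \<equiv> enl ! i"

lemma ix_bij: "bij_betw (ix::nat \<Rightarrow> 'n::finite) {..<(card (UNIV::'n set))} UNIV"
proof -
  have "bij_betw (\<lambda>i. (enl::'n list) ! i) {..<length (enl::'n list)} (set enl)"
    by (rule bij_betw_nth[OF enl_props(1)]) auto
  thus ?thesis using enl_props(2) enl_length by metis
qed

lemma sum_ix: "(\<Sum>a\<in>UNIV. f a) = (\<Sum>i<(card (UNIV::'n set)). f (ix i :: 'n::finite))"
  using sum.reindex_bij_betw[OF ix_bij, of f] by simp

definition toM :: "('n::finite \<Rightarrow> 'n \<Rightarrow> real) \<Rightarrow> complex mat" where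
  "toM B = mat (card (UNIV::'n set)) (card (UNIV::'n set)) (\<lambda>(i,j). complex_of_real (B (ix i) (ix j)))"

lemma toM_carrier: "toM (B::'n::finite \<Rightarrow> 'n \<Rightarrow> real) \<in> carrier_mat (card (UNIV::'n set)) (card (UNIV::'n set))"
  unfolding toM_def by auto

lemma toM_mult: "toM (mat_mult A (B::'n::finite \<Rightarrow> 'n \<Rightarrow> real)) = toM A * toM B"
  by (rule eq_matI) (auto simp: toM_def mat_mult_def scalar_prod_def sum_ix[where 'n='n] row_def col_def lessThan_atLeast0)

lemma toM_pow: "toM (mat_pow (B::'n::finite \<Rightarrow> 'n \<Rightarrow> real) k) = toM B ^\<^sub>m k"
proof (induction k)
  case 0
  show ?case
  proof (rule eq_matI)
    fix i j assume "i < dim_row (toM B ^\<^sub>m 0)" "j < dim_col (toM B ^\<^sub>m 0)"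
    hence ij: "i < (card (UNIV::'n set))" "j < (card (UNIV::'n set))" using toM_carrier[of B] by auto
    have "(ix i = (ix j :: 'n)) = (i = j)"
      using ij enl_props(1) enl_length[where 'n='n] nth_eq_iff_index_eq by metis
    thus "toM (mat_pow B 0) $$ (i, j) = (toM B ^\<^sub>m 0) $$ (i, j)" using ij by (simp add: toM_def)
  qed (auto simp: toM_def)
next
  case (Suc k) thus ?case by (simp add: toM_mult)
qed

abbreviation NN :: "'n::finite itself \<Rightarrow> nat" where "NN _ \<equiv> card (UNIV::'n set)"

lemma ix_surj: "\<exists>i<card (UNIV::'n set). (a::'n::finite) = ix i"
  using ix_bij[where 'n='n] unfolding bij_betw_def by auto

lemma eig_to_JNF:
  assumes "Defs.eigenvalue (B::'n::finite \<Rightarrow> 'n \<Rightarrow> real) l"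
  shows "Char_Poly.eigenvalue (toM B) l"
proof -
  obtain v where v0: "v \<noteq> (\<lambda>_. 0)" and ev: "\<And>i. (\<Sum>j\<in>UNIV. complex_of_real (B i j) * v j) = l * v i"
    using assms unfolding Defs.eigenvalue_def by blast
  define w where "w = vec (card (UNIV::'n set)) (\<lambda>i. v (ix i :: 'n))"
  obtain a where "v a \<noteq> 0" using v0 by auto
  moreover obtain i where i: "i < card (UNIV::'n set)" "a = ix i" using ix_surj by blast
  ultimately have "w $ i \<noteq> 0" unfolding w_def by simp
  hence wn: "w \<noteq> 0\<^sub>v (card (UNIV::'n set))" using i by auto
  have "toM B *\<^sub>v w = l \<cdot>\<^sub>v w"
  proof (rule eq_vecI)
    fix i assume "i < dim_vec (l \<cdot>\<^sub>v w)"
    hence i: "i < card (UNIV::'n set)" by (simp add: w_def)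
    have "(toM B *\<^sub>v w) $ i = (\<Sum>j<card (UNIV::'n set). complex_of_real (B (ix i) (ix j)) * v (ix j))"
      using i by (simp add: toM_def w_def scalar_prod_def row_def lessThan_atLeast0)
    also have "\<dots> = (\<Sum>a\<in>UNIV. complex_of_real (B (ix i) a) * v a)" by (simp add: sum_ix[where 'n='n])
    also have "\<dots> = l * v (ix i)" by (rule ev)
    finally show "(toM B *\<^sub>v w) $ i = (l \<cdot>\<^sub>v w) $ i" using i by (simp add: w_def)
  qed (simp add: toM_def w_def)
  thus ?thesis using wn unfolding Char_Poly.eigenvalue_def eigenvector_def
    by (intro exI[of _ w]) (auto simp: toM_def w_def)
qed

lemma eig_from_JNF:
  assumes "Char_Poly.eigenvalue (toM (B::'n::finite \<Rightarrow> 'n \<Rightarrow> real)) l"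
  shows "Defs.eigenvalue B l"
proof -
  obtain w where wc: "w \<in> carrier_vec (card (UNIV::'n set))" and wn: "w \<noteq> 0\<^sub>v (card (UNIV::'n set))"
    and ev: "toM B *\<^sub>v w = l \<cdot>\<^sub>v w"
    using assms unfolding Char_Poly.eigenvalue_def eigenvector_def by (auto simp: toM_def)
  define idx where "idx = inv_into {..<card (UNIV::'n set)} (ix :: nat \<Rightarrow> 'n)"
  have idx1: "ix (idx a) = a" "idx a < card (UNIV::'n set)" for a
  proof -
    have im: "a \<in> ix ` {..<card (UNIV::'n set)}" using ix_bij[where 'n='n] unfolding bij_betw_def by auto
    show "ix (idx a) = a" unfolding idx_def using f_inv_into_f[OF im] .
    show "idx a < card (UNIV::'n set)" unfolding idx_def using inv_into_into[OF im] by simp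
  qed
  have idx2: "idx (ix i) = i" if "i < card (UNIV::'n set)" for i
    using ix_bij[where 'n='n] that unfolding idx_def bij_betw_def by (auto simp: inv_into_f_f)
  define v where "v a = w $ idx a" for a
  obtain i where i: "i < card (UNIV::'n set)" "w $ i \<noteq> 0" using wn wc by (auto simp: vec_eq_iff)
  hence "v (ix i) \<noteq> 0" by (simp add: v_def idx2)
  hence v0: "v \<noteq> (\<lambda>_. 0)" by metis
  have "(\<Sum>j\<in>UNIV. complex_of_real (B b j) * v j) = l * v b" for b
  proof -
    have "(\<Sum>j\<in>UNIV. complex_of_real (B b j) * v j) = (\<Sum>j<card (UNIV::'n set). complex_of_real (B b (ix j)) * w $ j)"
      by (simp add: sum_ix[where 'n='n] v_def idx2)
    also have "\<dots> = (toM B *\<^sub>v w) $ idx b"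
      using idx1[of b] wc by (simp add: toM_def scalar_prod_def row_def lessThan_atLeast0)
    also have "\<dots> = l * v b" using ev idx1[of b] wc by (simp add: v_def)
    finally show ?thesis .
  qed
  thus ?thesis using v0 unfolding Defs.eigenvalue_def by blast
qed

lemma eig_set_eq: "{l. Defs.eigenvalue (B::'n::finite \<Rightarrow> 'n \<Rightarrow> real) l} = Spectral_Radius.spectrum (toM B)"
  unfolding Spectral_Radius.spectrum_def using eig_to_JNF eig_from_JNF by blast

lemma eig_finite: "finite {l. Defs.eigenvalue (B::'n::finite \<Rightarrow> 'n \<Rightarrow> real) l}"
  unfolding eig_set_eq using card_finite_spectrum(1)[OF toM_carrier] .

lemma eig_nonempty: "{l. Defs.eigenvalue (B::'n::finite \<Rightarrow> 'n \<Rightarrow> real) l} \<noteq> {}"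
  unfolding eig_set_eq by (rule spectrum_non_empty[OF toM_carrier]) (simp add: card_gt_0_iff)

lemma eig_le_sr: "Defs.eigenvalue (B::'n::finite \<Rightarrow> 'n \<Rightarrow> real) l \<Longrightarrow> cmod l \<le> Defs.spectral_radius B"
  unfolding Defs.spectral_radius_def using eig_finite[of B] by (intro Max_ge) auto

lemma sr_attained: "\<exists>l. Defs.eigenvalue (B::'n::finite \<Rightarrow> 'n \<Rightarrow> real) l \<and> cmod l = Defs.spectral_radius B"
proof -
  have "Defs.spectral_radius B \<in> cmod ` {l. Defs.eigenvalue B l}"
    unfolding Defs.spectral_radius_def using eig_finite[of B] eig_nonempty[of B] by (intro Max_in) auto
  thus ?thesis by auto
qed

lemma mat_pow_scale:
  "mat_pow (\<lambda>i j. B i j / s) k = (\<lambda>i j. mat_pow (B::'n::finite \<Rightarrow> 'n \<Rightarrow> real) k i j / s ^ k)"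
proof (induction k)
  case (Suc k)
  show ?case by (simp add: Suc mat_mult_def sum_divide_distrib mult.commute)
qed auto

lemma sr_lower:
  fixes B :: "'n::finite \<Rightarrow> 'n \<Rightarrow> real"
  assumes r: "r > 0" and c: "c > 0" and grow: "\<And>k. c * r ^ k \<le> (\<Sum>j\<in>UNIV. mat_pow B k ia j)"
  shows "r \<le> Defs.spectral_radius B"
proof (rule ccontr)
  assume "\<not> r \<le> Defs.spectral_radius B"
  hence lt: "Defs.spectral_radius B < r" by simp
  define s where "s = (max (Defs.spectral_radius B) 0 + r) / 2"
  have s0: "s > 0" and sr: "s < r" and rs: "Defs.spectral_radius B < s" using lt r by (auto simp: s_def)
  define B' where "B' = (\<lambda>i j. B i j / s)"
  have evB: "Defs.eigenvalue B (of_real s * \<mu>)" if hyp: "Defs.eigenvalue B' \<mu>" for \<mu>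
  proof -
    obtain v where v0: "v \<noteq> (\<lambda>_. 0)" and ev: "\<And>i. (\<Sum>j\<in>UNIV. complex_of_real (B' i j) * v j) = \<mu> * v i"
      using hyp unfolding Defs.eigenvalue_def by blast
    have "(\<Sum>j\<in>UNIV. complex_of_real (B i j) * v j) = of_real s * \<mu> * v i" for i
    proof -
      have "(\<Sum>j\<in>UNIV. complex_of_real (B i j) * v j) = of_real s * (\<Sum>j\<in>UNIV. complex_of_real (B' i j) * v j)"
        using s0 by (simp add: B'_def sum_distrib_left)
      thus ?thesis using ev[of i] by simp
    qed
    thus ?thesis using v0 unfolding Defs.eigenvalue_def by blast
  qed
  have n0: "card (UNIV::'n set) > 0" by (simp add: card_gt_0_iff)
  have "Spectral_Radius.spectral_radius (toM B') < 1"
  proof -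
    obtain \<mu> where mu: "\<mu> \<in> Spectral_Radius.spectrum (toM B')" and eq: "Spectral_Radius.spectral_radius (toM B') = norm \<mu>"
      using spectral_radius_mem_max(1)[OF toM_carrier n0, of B'] by auto
    have "Defs.eigenvalue B' \<mu>" using mu eig_set_eq[of B'] by auto
    from eig_le_sr[OF evB[OF this]] have "cmod (of_real s * \<mu>) \<le> Defs.spectral_radius B" .
    moreover have "cmod (of_real s * \<mu>) = s * cmod \<mu>" using s0 by (simp add: norm_mult)
    ultimately have "s * cmod \<mu> < s * 1" using rs by linarith
    hence "cmod \<mu> < 1" using s0 mult_less_cancel_left_pos by blast
    thus ?thesis using eq by simp
  qed
  then obtain c' where c': "\<And>k. norm_bound (toM B' ^\<^sub>m k) c'"
    using spectral_radius_jnf_norm_bound_less_1_upper_triangular[OF toM_carrier] by blast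
  have bnd: "\<bar>mat_pow B k a b\<bar> \<le> c' * s ^ k" for k a b
  proof -
    obtain i where i: "i < card (UNIV::'n set)" "a = ix i" using ix_surj by blast
    obtain j where j: "j < card (UNIV::'n set)" "b = ix j" using ix_surj by blast
    have "norm ((toM B' ^\<^sub>m k) $$ (i, j)) \<le> c'"
      using c'[of k] i j toM_carrier[of B'] unfolding norm_bound_def by auto
    moreover have "(toM B' ^\<^sub>m k) $$ (i, j) = complex_of_real (mat_pow B' k (ix i) (ix j))"
      unfolding toM_pow[symmetric] using i j by (simp add: toM_def)
    ultimately have "\<bar>mat_pow B' k a b\<bar> \<le> c'" using i j by simp
    hence "\<bar>mat_pow B k a b / s ^ k\<bar> \<le> c'"
      by (simp add: B'_def mat_pow_scale)
    thus ?thesis using s0 by (simp add: abs_div pos_divide_le_eq)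
  qed
  define N where "N = real (card (UNIV::'n set))"
  have le: "c * r ^ k \<le> N * c' * s ^ k" for k
  proof -
    have "c * r ^ k \<le> (\<Sum>j\<in>UNIV. mat_pow B k ia j)" by (rule grow)
    also have "\<dots> \<le> (\<Sum>j::'n\<in>UNIV. c' * s ^ k)" 
    proof (rule sum_mono)
      fix j :: 'n show "mat_pow B k ia j \<le> c' * s ^ k" using bnd[of k ia j] by linarith
    qed
    finally show ?thesis by (simp add: N_def)
  qed
  have "1 < r / s" using s0 sr by simp
  then obtain k where k: "N * c' / c < (r / s) ^ k" using real_arch_pow by blast
  have "(r / s) ^ k * c * s ^ k \<le> N * c' * s ^ k" using le[of k] s0 by (simp add: power_divide mult.commute)
  hence "(r / s) ^ k * c \<le> N * c'" using s0 by (simp add: mult_le_cancel_right)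
  hence "(r / s) ^ k \<le> N * c' / c" using c by (simp add: pos_le_divide_eq)
  thus False using k by simp
qed



lemma mat_mult_assoc: "mat_mult (mat_mult A B) C = mat_mult A (mat_mult B (C::'n::finite \<Rightarrow> 'n \<Rightarrow> real))"
  unfolding mat_mult_def
  by (rule ext, rule ext) (simp add: sum_distrib_left sum_distrib_right mult.assoc, subst sum.swap, rule refl)

lemma ifmult: "(if i = j then 1 else 0) * (x::real) = (if i = j then x else 0)"
  "(x::real) * (if i = j then 1 else 0) = (if i = j then x else 0)" by auto

lemma mat_mult_id_left: "mat_mult (\<lambda>i j. if i = j then 1 else 0) B = (B::'n::finite \<Rightarrow> 'n \<Rightarrow> real)"
  unfolding mat_mult_def by (simp add: ifmult)

lemma mat_mult_id_right: "mat_mult B (\<lambda>i j. if i = j then 1 else 0) = (B::'n::finite \<Rightarrow> 'n \<Rightarrow> real)"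
  unfolding mat_mult_def by (simp add: ifmult)

lemma mat_pow_comm: "mat_mult B (mat_pow B k) = mat_mult (mat_pow B k) (B::'n::finite \<Rightarrow> 'n \<Rightarrow> real)"
proof (induction k)
  case 0 show ?case by (simp add: mat_mult_id_left mat_mult_id_right)
next
  case (Suc k)
  have "mat_mult B (mat_pow B (Suc k)) = mat_mult (mat_mult B (mat_pow B k)) B"
    by (simp add: mat_mult_assoc)
  also have "\<dots> = mat_mult (mat_pow B (Suc k)) B" by (simp add: Suc)
  finally show ?case .
qed

lemma mat_pow_Suc': "mat_pow B (Suc k) = mat_mult B (mat_pow (B::'n::finite \<Rightarrow> 'n \<Rightarrow> real) k)"
  by (simp add: mat_pow_comm)

definition vp :: "('n::finite \<Rightarrow> 'n \<Rightarrow> real) \<Rightarrow> nat \<Rightarrow> ('n \<Rightarrow> real) \<Rightarrow> 'n \<Rightarrow> real" where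
  "vp B k u i = (\<Sum>j\<in>UNIV. mat_pow B k i j * u j)"

lemma vp_0: "vp B 0 u i = u i"
  unfolding vp_def by (simp add: ifmult)

lemma vp_Suc: "vp B (Suc k) u i = (\<Sum>j\<in>UNIV. B i j * vp B k u j)"
  unfolding vp_def mat_pow_Suc' mat_mult_def
  by (simp add: sum_distrib_left sum_distrib_right mult.assoc, subst sum.swap, rule refl)

lemma mat_pow_nonneg: "(\<And>i j. B i j \<ge> 0) \<Longrightarrow> mat_pow (B::'n::finite \<Rightarrow> 'n \<Rightarrow> real) k i j \<ge> 0"
  by (induction k arbitrary: i j) (auto simp: mat_mult_def intro!: sum_nonneg)

lemma growth_from_sr:
  fixes B :: "'n::finite \<Rightarrow> 'n \<Rightarrow> real"
  assumes nn: "\<And>i j. B i j \<ge> 0"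
  shows "\<exists>i0 C. C > 0 \<and> (\<forall>k. C * Defs.spectral_radius B ^ k \<le> (\<Sum>j\<in>UNIV. mat_pow B k i0 j))"
proof -
  obtain l where ev: "Defs.eigenvalue B l" and lr: "cmod l = Defs.spectral_radius B"
    using sr_attained by blast
  obtain v where v0: "v \<noteq> (\<lambda>_. 0)" and evv: "\<And>i. (\<Sum>j\<in>UNIV. complex_of_real (B i j) * v j) = l * v i"
    using ev unfolding Defs.eigenvalue_def by blast
  define \<rho> where "\<rho> = Defs.spectral_radius B"
  have \<rho>0: "\<rho> \<ge> 0" using lr unfolding \<rho>_def by (metis norm_ge_zero)
  define u where "u j = cmod (v j)" for j
  have u0: "u j \<ge> 0" for j by (simp add: u_def)
  have sub: "\<rho> * u i \<le> (\<Sum>j\<in>UNIV. B i j * u j)" for i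
  proof -
    have "\<rho> * u i = cmod (l * v i)" by (simp add: u_def \<rho>_def lr norm_mult)
    also have "\<dots> = cmod (\<Sum>j\<in>UNIV. complex_of_real (B i j) * v j)" by (simp add: evv)
    also have "\<dots> \<le> (\<Sum>j\<in>UNIV. cmod (complex_of_real (B i j) * v j))" by (rule norm_sum)
    also have "\<dots> = (\<Sum>j\<in>UNIV. B i j * u j)" using nn by (simp add: u_def norm_mult)
    finally show ?thesis .
  qed
  have grow: "\<rho> ^ k * u i \<le> vp B k u i" for k i
  proof (induction k arbitrary: i)
    case 0 show ?case by (simp add: vp_0)
  next
    case (Suc k)
    have "\<rho> ^ Suc k * u i = \<rho> ^ k * (\<rho> * u i)" by simp
    also have "\<dots> \<le> \<rho> ^ k * (\<Sum>j\<in>UNIV. B i j * u j)" using sub \<rho>0 by (simp add: mult_left_mono)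
    also have "\<dots> = (\<Sum>j\<in>UNIV. B i j * (\<rho> ^ k * u j))" by (simp add: sum_distrib_left mult.left_commute)
    also have "\<dots> \<le> (\<Sum>j\<in>UNIV. B i j * vp B k u j)"
      using Suc nn by (intro sum_mono mult_left_mono) auto
    finally show ?case by (simp add: vp_Suc)
  qed
  obtain i0 where "v i0 \<noteq> 0" using v0 by auto
  hence ui0: "u i0 > 0" by (simp add: u_def)
  define M where "M = Max (range u)"
  have uM: "u j \<le> M" for j unfolding M_def by (rule Max_ge) auto
  have M0: "M > 0" using uM[of i0] ui0 by linarith
  have "(u i0 / M) * \<rho> ^ k \<le> (\<Sum>j\<in>UNIV. mat_pow B k i0 j)" for k
  proof -
    have "\<rho> ^ k * u i0 \<le> vp B k u i0" by (rule grow)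
    also have "\<dots> \<le> (\<Sum>j\<in>UNIV. mat_pow B k i0 j * M)" unfolding vp_def
      using mat_pow_nonneg[OF nn] uM by (intro sum_mono mult_left_mono) auto
    finally have "\<rho> ^ k * u i0 \<le> (\<Sum>j\<in>UNIV. mat_pow B k i0 j) * M" by (simp add: sum_distrib_right)
    thus ?thesis using M0 by (simp add: field_simps)
  qed
  thus ?thesis unfolding \<rho>_def using ui0 M0 by (intro exI[of _ i0] exI[of _ "u i0 / M"]) auto
qed

lemma jensen_sq:
  fixes w t :: "'a \<Rightarrow> real"
  assumes "finite A" "\<And>i. i \<in> A \<Longrightarrow> w i \<ge> 0" "(\<Sum>i\<in>A. w i) = 1"
  shows "(\<Sum>i\<in>A. w i * t i)^2 \<le> (\<Sum>i\<in>A. w i * (t i)^2)"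
proof -
  define m where "m = (\<Sum>i\<in>A. w i * t i)"
  have "0 \<le> (\<Sum>i\<in>A. w i * (t i - m)^2)" using assms(2) by (intro sum_nonneg) auto
  also have "\<dots> = (\<Sum>i\<in>A. w i * (t i)^2) - 2 * m * (\<Sum>i\<in>A. w i * t i) + m^2 * (\<Sum>i\<in>A. w i)"
    by (simp add: power2_diff algebra_simps sum.distrib sum_subtractf sum_distrib_left sum_distrib_right)
  finally show ?thesis using assms(3) unfolding m_def by (simp add: power2_eq_square)
qed


lemma move2: "(\<Sum>a\<in>A. \<Sum>c\<in>C. \<Sum>d\<in>D. f a c d) = (\<Sum>c\<in>C. \<Sum>d\<in>D. \<Sum>a\<in>A. f a c d)"
proof -
  have "(\<Sum>a\<in>A. \<Sum>c\<in>C. \<Sum>d\<in>D. f a c d) = (\<Sum>c\<in>C. \<Sum>a\<in>A. \<Sum>d\<in>D. f a c d)" by (rule sum.swap)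
  also have "\<dots> = (\<Sum>c\<in>C. \<Sum>d\<in>D. \<Sum>a\<in>A. f a c d)" by (rule sum.cong[OF refl], rule sum.swap)
  finally show ?thesis .
qed
lemma move3: "(\<Sum>a\<in>A. \<Sum>c\<in>C. \<Sum>d\<in>D. \<Sum>e\<in>E. f a c d e) = (\<Sum>c\<in>C. \<Sum>d\<in>D. \<Sum>e\<in>E. \<Sum>a\<in>A. f a c d e)"
proof -
  have "(\<Sum>a\<in>A. \<Sum>c\<in>C. \<Sum>d\<in>D. \<Sum>e\<in>E. f a c d e) = (\<Sum>c\<in>C. \<Sum>a\<in>A. \<Sum>d\<in>D. \<Sum>e\<in>E. f a c d e)" by (rule sum.swap)
  also have "\<dots> = (\<Sum>c\<in>C. \<Sum>d\<in>D. \<Sum>e\<in>E. \<Sum>a\<in>A. f a c d e)" by (rule sum.cong[OF refl], rule move2)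
  finally show ?thesis .
qed

lemma sum_pair: "(\<Sum>p\<in>UNIV. f p) = (\<Sum>a\<in>UNIV. \<Sum>b\<in>UNIV. f (a,b))"
  for f :: "('a::finite \<times> 'b::finite) \<Rightarrow> real"
  by (subst sum.cartesian_product) (simp add: UNIV_Times_UNIV)

definition R0 where "R0 P Q g k x y = vp (Phi0 P Q g) k (\<lambda>_. 1) (x,y)"
definition R1 where "R1 P Q g k x y z = vp (Phi1 P Q g) k (\<lambda>_. 1) (x,y,z)"

lemma R0_Suc: "R0 P Q g (Suc k) x y = (\<Sum>x'\<in>UNIV. P x x' * (\<Sum>y'\<in>UNIV. (exp (g x y x' y') * Q y y') * R0 P Q g k x' y'))"
  for P Q :: "'e::finite \<Rightarrow> 'e \<Rightarrow> real"
  unfolding R0_def vp_Suc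
  by (subst sum_pair) (simp add: Phi0_def sum_distrib_left mult_ac)

lemma R1_Suc: "R1 P Q g (Suc k) x y z = (\<Sum>x'\<in>UNIV. P x x' * (\<Sum>y'\<in>UNIV. \<Sum>z'\<in>UNIV.
     (exp (g x y x' y') * Q y y') * (exp (g x z x' z') * Q z z') * R1 P Q g k x' y' z'))"
  for P Q :: "'e::finite \<Rightarrow> 'e \<Rightarrow> real"
  unfolding R1_def vp_Suc
  by (subst sum_pair, subst sum_pair) (simp add: Phi1_def sum_distrib_left mult_ac exp_add)

lemma cs_claim:
  fixes P Q :: "'e::finite \<Rightarrow> 'e \<Rightarrow> real"
  assumes st: "stochastic P"
  shows "(\<Sum>y\<in>UNIV. c y * R0 P Q g k x y)^2 \<le> (\<Sum>y\<in>UNIV. \<Sum>z\<in>UNIV. c y * c z * R1 P Q g k x y z)"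
proof (induction k arbitrary: x c)
  case 0
  show ?case by (simp add: R0_def R1_def vp_0 power2_eq_square sum_product)
next
  case (Suc k)
  define A where "A y x' y' = exp (g x y x' y') * Q y y'" for y x' y'
  define d where "d x' y' = (\<Sum>y\<in>UNIV. c y * A y x' y')" for x' y'
  define T where "T x' = (\<Sum>y'\<in>UNIV. d x' y' * R0 P Q g k x' y')" for x'
  have Pn: "P x x' \<ge> 0" for x' using st unfolding stochastic_def by auto
  have Ps: "(\<Sum>x'\<in>UNIV. P x x') = 1" using st unfolding stochastic_def by auto
  have L1: "(\<Sum>y\<in>UNIV. c y * R0 P Q g (Suc k) x y) = (\<Sum>x'\<in>UNIV. P x x' * T x')"
  proof -
    have "(\<Sum>y\<in>UNIV. c y * R0 P Q g (Suc k) x y) =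
       (\<Sum>y\<in>UNIV. \<Sum>x'\<in>UNIV. \<Sum>y'\<in>UNIV. c y * (P x x' * (A y x' y' * R0 P Q g k x' y')))"
      by (simp add: R0_Suc A_def sum_distrib_left)
    also have "\<dots> = (\<Sum>x'\<in>UNIV. \<Sum>y'\<in>UNIV. \<Sum>y\<in>UNIV. c y * (P x x' * (A y x' y' * R0 P Q g k x' y')))"
      by (rule move2)
    also have "\<dots> = (\<Sum>x'\<in>UNIV. P x x' * T x')"
      by (simp add: T_def d_def sum_distrib_left sum_distrib_right mult_ac)
    finally show ?thesis .
  qed
  have L2: "(\<Sum>x'\<in>UNIV. P x x' * T x')^2 \<le> (\<Sum>x'\<in>UNIV. P x x' * (T x')^2)"
    by (rule jensen_sq) (use Pn Ps in auto)
  have L3: "(\<Sum>x'\<in>UNIV. P x x' * (T x')^2) \<le>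
     (\<Sum>x'\<in>UNIV. P x x' * (\<Sum>y'\<in>UNIV. \<Sum>z'\<in>UNIV. d x' y' * d x' z' * R1 P Q g k x' y' z'))"
    unfolding T_def using Suc.IH Pn by (intro sum_mono mult_left_mono) auto
  have L4: "(\<Sum>x'\<in>UNIV. P x x' * (\<Sum>y'\<in>UNIV. \<Sum>z'\<in>UNIV. d x' y' * d x' z' * R1 P Q g k x' y' z')) =
     (\<Sum>y\<in>UNIV. \<Sum>z\<in>UNIV. c y * c z * R1 P Q g (Suc k) x y z)"
  proof -
    define H where "H y z x' y' z' = c y * c z * (P x x' * (A y x' y' * A z x' z' * R1 P Q g k x' y' z'))" for y z x' y' z'
    have "(\<Sum>y\<in>UNIV. \<Sum>z\<in>UNIV. c y * c z * R1 P Q g (Suc k) x y z) =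
        (\<Sum>y\<in>UNIV. \<Sum>z\<in>UNIV. \<Sum>x'\<in>UNIV. \<Sum>y'\<in>UNIV. \<Sum>z'\<in>UNIV. H y z x' y' z')"
      by (simp add: R1_Suc H_def A_def sum_distrib_left mult_ac)
    also have "\<dots> = (\<Sum>y\<in>UNIV. \<Sum>x'\<in>UNIV. \<Sum>y'\<in>UNIV. \<Sum>z'\<in>UNIV. \<Sum>z\<in>UNIV. H y z x' y' z')"
      by (rule sum.cong[OF refl], rule move3)
    also have "\<dots> = (\<Sum>x'\<in>UNIV. \<Sum>y'\<in>UNIV. \<Sum>z'\<in>UNIV. \<Sum>y\<in>UNIV. \<Sum>z\<in>UNIV. H y z x' y' z')"
      by (rule move3)
    also have "\<dots> = (\<Sum>x'\<in>UNIV. \<Sum>y'\<in>UNIV. \<Sum>z'\<in>UNIV. P x x' * (d x' y' * d x' z' * R1 P Q g k x' y' z'))"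
    proof (intro sum.cong refl)
      fix x' y' z'
      have "P x x' * (d x' y' * d x' z' * R1 P Q g k x' y' z') =
        (\<Sum>y\<in>UNIV. \<Sum>z\<in>UNIV. P x x' * (c y * A y x' y' * (c z * A z x' z') * R1 P Q g k x' y' z'))"
        unfolding d_def by (simp only: sum_distrib_left sum_distrib_right) (rule sum.swap)
      also have "\<dots> = (\<Sum>y\<in>UNIV. \<Sum>z\<in>UNIV. H y z x' y' z')" by (simp add: H_def mult_ac)
      finally show "(\<Sum>y\<in>UNIV. \<Sum>z\<in>UNIV. H y z x' y' z') = P x x' * (d x' y' * d x' z' * R1 P Q g k x' y' z')" by simp
    qed
    also have "\<dots> = (\<Sum>x'\<in>UNIV. P x x' * (\<Sum>y'\<in>UNIV. \<Sum>z'\<in>UNIV. d x' y' * d x' z' * R1 P Q g k x' y' z'))"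
      by (simp add: sum_distrib_left)
    finally show ?thesis by simp
  qed
  show ?case using L1 L2 L3 L4 by simp
qed



lemma R0_rowsum: "R0 P Q g k x y = (\<Sum>j\<in>UNIV. mat_pow (Phi0 P Q g) k (x,y) j)"
  by (simp add: R0_def vp_def)

lemma R1_rowsum: "R1 P Q g k x y z = (\<Sum>j\<in>UNIV. mat_pow (Phi1 P Q g) k (x,y,z) j)"
  by (simp add: R1_def vp_def)

theorem mainTheorem5:
  fixes P Q :: "'e::finite \<Rightarrow> 'e \<Rightarrow> real"
    and g :: "'e \<Rightarrow> 'e \<Rightarrow> 'e \<Rightarrow> 'e \<Rightarrow> real"
  assumes "stochastic P" "irreducible_mat P" "aperiodic P"
    and "stochastic Q" "irreducible_mat Q" "aperiodic Q"
  shows "ln (varphi1 P Q g) \<ge> 2 * ln (varphi0 P Q g)"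
proof -
  have stP: "stochastic P" and stQ: "stochastic Q" by fact+
  have Pn: "P a b \<ge> 0" and Qn: "Q a b \<ge> 0" for a b using stP stQ unfolding stochastic_def by auto
  have Ps: "(\<Sum>b\<in>UNIV. P a b) = 1" and Qs: "(\<Sum>b\<in>UNIV. Q a b) = 1" for a
    using stP stQ unfolding stochastic_def by auto
  have nn0: "Phi0 P Q g i j \<ge> 0" for i j using Pn Qn by (auto simp: Phi0_def split: prod.splits)
  define \<rho>0 where "\<rho>0 = varphi0 P Q g"
  define \<rho>1 where "\<rho>1 = varphi1 P Q g"
  define gm where "gm = Min (range (\<lambda>q::'e\<times>'e\<times>'e\<times>'e. g (fst q) (fst (snd q)) (fst (snd (snd q))) (snd (snd (snd q)))))"
  have gm: "gm \<le> g a b c d" for a b c d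
    unfolding gm_def by (rule Min_le) (auto intro!: image_eqI[of _ _ "(a,b,c,d)"])
  define m where "m = exp gm"
  have m0: "m > 0" by (simp add: m_def)
  have mle: "m \<le> exp (g a b c d)" for a b c d unfolding m_def using gm by simp
  have Rm: "m ^ k \<le> R0 P Q g k x y" for k x y
  proof (induction k arbitrary: x y)
    case 0 show ?case by (simp add: R0_def vp_0)
  next
    case (Suc k)
    have "m ^ Suc k = (\<Sum>x'\<in>UNIV. P x x' * (\<Sum>y'\<in>UNIV. (m * Q y y') * m ^ k))"
      by (simp add: sum_distrib_left[symmetric] sum_distrib_right[symmetric] Ps Qs mult_ac)
    also have "\<dots> \<le> (\<Sum>x'\<in>UNIV. P x x' * (\<Sum>y'\<in>UNIV. (exp (g x y x' y') * Q y y') * R0 P Q g k x' y'))"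
      using Pn Qn mle Suc.IH m0
      by (intro sum_mono mult_left_mono mult_mono) auto
    finally show ?case by (simp add: R0_Suc)
  qed
  have "m \<le> \<rho>0" unfolding \<rho>0_def varphi0_def
    by (rule sr_lower[where c=1 and ia="(undefined,undefined)"]) (use m0 Rm in \<open>auto simp: R0_rowsum\<close>)
  hence r0: "\<rho>0 > 0" using m0 by simp
  obtain i0 C where C: "C > 0" and gr: "\<And>k. C * \<rho>0 ^ k \<le> (\<Sum>j\<in>UNIV. mat_pow (Phi0 P Q g) k i0 j)"
    using growth_from_sr[of "Phi0 P Q g", OF nn0] unfolding \<rho>0_def varphi0_def by blast
  obtain x0 y0 where i0: "i0 = (x0, y0)" by (cases i0)
  have "(C^2) * (\<rho>0^2) ^ k \<le> (\<Sum>j\<in>UNIV. mat_pow (Phi1 P Q g) k (x0,y0,y0) j)" for k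
  proof -
    have a: "C * \<rho>0 ^ k \<le> R0 P Q g k x0 y0" using gr[of k] by (simp add: i0 R0_rowsum)
    have "(C * \<rho>0 ^ k)^2 \<le> (R0 P Q g k x0 y0)^2"
      using a C r0 by (intro power_mono) auto
    also have "\<dots> \<le> R1 P Q g k x0 y0 y0"
      using cs_claim[OF stP, where c="\<lambda>y. if y = y0 then 1 else 0" and Q=Q and g=g and k=k and x=x0] by (simp add: ifmult if_distrib[of "\<lambda>t. t * _"] cong: if_cong)
    finally show ?thesis by (simp add: R1_rowsum power_mult_distrib power_mult[symmetric] mult.commute)
  qed
  hence "\<rho>0^2 \<le> \<rho>1" unfolding \<rho>1_def varphi1_def
    using C r0 by (intro sr_lower[where c="C^2" and ia="(x0,y0,y0)"]) auto
  moreover have "\<rho>0^2 > 0" using r0 by simp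
  ultimately have "ln (\<rho>0^2) \<le> ln \<rho>1" by (metis ln_le_cancel_iff order_less_le_trans)
  thus ?thesis using r0 by (simp add: \<rho>0_def \<rho>1_def ln_realpow)
qed

end
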